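(* Assume the weight regularity condition and $\frac1N\sum_iw_i^4\to\mathbb E[W^4]<\infty$. Take $\beta=\beta_{c,N}={\rm asinh}(1/\nu_N)$ and $\lambda=3/4$ in the definition of $G_N$. Then for every $z,r\in\mathbb R$, \[ \lim_{N\to\infty}N\,G_N(z/N^{1/4};r)=-zr\sqrt{\frac{\mathbb E[W]}{\nu}}+\frac1{12}\frac{\mathbb E[W^4]}{\mathbb E[W^2]^2}z^4. \]
   Context: Weights $w_i>0$, $W_N=w_{U_N}$ with $U_N$ uniform on $[N]$. Weight regularity: $W_N\to W$ in distribution, $\mathbb E[W_N^2]\to\mathbb E[W^2]<\infty$, $\mathbb E[W]>0$. $\nu=\mathbb E[W^2]/\mathbb E[W]$, $\nu_N=\mathbb E[W_N^2]/\mathbb E[W_N]$. $\alpha_N(\beta)=\sqrt{\sinh(\beta)/\mathbb E[W_N]}$ and $G_N(z;r)=\frac12z^2-\frac1N\sum_{i\in[N]}\log\cosh\big(\alpha_N(\beta)w_iz+r/N^\lambda\big)$. *)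

theory Defs
  imports "HOL-Probability.Probability"
begin

text \<open>Triangular array of weights: w N i is the weight of vertex i in [N] = {1..N}.\<close>

definition emp_moment :: "(nat \<Rightarrow> nat \<Rightarrow> real) \<Rightarrow> nat \<Rightarrow> nat \<Rightarrow> real" where
  "emp_moment w N k = (1 / real N) * (\<Sum>i\<in>{1..N}. (w N i) ^ k)"

definition emp_law :: "(nat \<Rightarrow> nat \<Rightarrow> real) \<Rightarrow> nat \<Rightarrow> real measure" where
  "emp_law w N = distr (measure_pmf (pmf_of_set {1..N})) borel (w N)"

definition nu_N :: "(nat \<Rightarrow> nat \<Rightarrow> real) \<Rightarrow> nat \<Rightarrow> real" where
  "nu_N w N = emp_moment w N 2 / emp_moment w N 1"

definition alpha_N :: "(nat \<Rightarrow> nat \<Rightarrow> real) \<Rightarrow> nat \<Rightarrow> real \<Rightarrow> real" where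
  "alpha_N w N \<beta> = sqrt (sinh \<beta> / emp_moment w N 1)"

definition G_N :: "(nat \<Rightarrow> nat \<Rightarrow> real) \<Rightarrow> nat \<Rightarrow> real \<Rightarrow> real \<Rightarrow> real \<Rightarrow> real \<Rightarrow> real" where
  "G_N w N \<beta> lam z r = z\<^sup>2 / 2
     - (1 / real N) * (\<Sum>i\<in>{1..N}. ln (cosh (alpha_N w N \<beta> * w N i * z + r / real N powr lam)))"

definition beta_cN :: "(nat \<Rightarrow> nat \<Rightarrow> real) \<Rightarrow> nat \<Rightarrow> real" where
  "beta_cN w N = arsinh (1 / nu_N w N)"

end

theory Submission
  imports Defs
begin



lemma mono_from_deriv:
  fixes f f' :: "real \<Rightarrow> real"
  assumes d: "\<And>x. (f has_real_derivative f' x) (at x)" and p: "\<And>x. 0 \<le> x \<Longrightarrow> 0 \<le> f' x" and x: "0 \<le> x"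
  shows "f 0 \<le> f x"
proof (rule DERIV_nonneg_imp_increasing_open[OF x])
  show "\<And>y. 0 < y \<Longrightarrow> y < x \<Longrightarrow> \<exists>z. (f has_real_derivative z) (at y) \<and> 0 \<le> z"
    using d p by (meson less_imp_le)
  show "continuous_on {0..x} f"
    using d by (meson DERIV_isCont continuous_at_imp_continuous_on)
qed

lemma tanh_le_x: "0 \<le> (x::real) \<Longrightarrow> tanh x \<le> x"
proof -
  assume x: "0 \<le> x"
  have "(\<lambda>x. x - tanh x) 0 \<le> (\<lambda>x. x - tanh x) x"
  proof (rule mono_from_deriv[where f'="\<lambda>x. tanh x ^ 2"])
    show "((\<lambda>x. x - tanh x) has_real_derivative tanh x ^ 2) (at x)" for x :: real
      by (auto intro!: derivative_eq_intros simp: power2_eq_square)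
  qed (use x in auto)
  then show ?thesis by simp
qed

lemma tanh_ge3: "0 \<le> (x::real) \<Longrightarrow> x - x^3/3 \<le> tanh x"
proof -
  assume x: "0 \<le> x"
  have "(\<lambda>x. tanh x - x + x^3/3) 0 \<le> (\<lambda>x. tanh x - x + x^3/3) x"
  proof (rule mono_from_deriv[where f'="\<lambda>x. x^2 - tanh x ^ 2"])
    show "((\<lambda>x. tanh x - x + x^3/3) has_real_derivative x^2 - tanh x ^ 2) (at x)" for x :: real
      by (auto intro!: derivative_eq_intros simp: power2_eq_square)
    show "0 \<le> x^2 - tanh x ^ 2" if "0 \<le> x" for x :: real
      using tanh_le_x[OF that] that by (simp add: power_mono)
  qed (use x in auto)
  then show ?thesis by simp
qed

lemma tanh_le5: "0 \<le> (x::real) \<Longrightarrow> tanh x \<le> x - x^3/3 + 2*x^5/15"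
proof -
  assume x: "0 \<le> x"
  have "(\<lambda>x. x - x^3/3 + 2*x^5/15 - tanh x) 0 \<le> (\<lambda>x. x - x^3/3 + 2*x^5/15 - tanh x) x"
  proof (rule mono_from_deriv[where f'="\<lambda>x. tanh x ^ 2 - x^2 + 2*x^4/3"])
    show "((\<lambda>x. x - x^3/3 + 2*x^5/15 - tanh x) has_real_derivative tanh x ^ 2 - x^2 + 2*x^4/3) (at x)" for x :: real
      by (auto intro!: derivative_eq_intros simp: power2_eq_square)
    show "0 \<le> tanh x ^ 2 - x^2 + 2*x^4/3" if "0 \<le> x" for x :: real
    proof (cases "x - x^3/3 \<ge> 0")
      case True
      have "(x - x^3/3)^2 \<le> tanh x ^ 2" using tanh_ge3[OF that] True by (simp add: power_mono)
      moreover have "(x - x^3/3)^2 = x^2 - 2*x^4/3 + x^6/9" by (simp add: power2_eq_square algebra_simps power_numeral_reduce)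
      moreover have "x^6/9 \<ge> 0" by simp
      ultimately show ?thesis by linarith
    next
      case False
      then have "x * 3 < x * x^2" using that by (simp add: power2_eq_square power3_eq_cube algebra_simps)
      moreover have "x > 0" using calculation that by (cases "x = 0") auto
      ultimately have "3 < x^2" by simp
      then have "x^2 * 1 \<le> x^2 * (2*x^2/3)" by (intro mult_left_mono) auto
      then have "x^2 - 2*x^4/3 \<le> 0" by (simp add: power2_eq_square power4_eq_xxxx algebra_simps)
      then show ?thesis by (smt (verit) zero_le_power2)
    qed
  qed (use x in auto)
  then show ?thesis by simp
qed

lemma lncosh_deriv: "((\<lambda>x. ln (cosh x)) has_real_derivative tanh x) (at (x::real))"
  by (auto intro!: derivative_eq_intros simp: tanh_def)

lemma lncosh_le2_pos: "0 \<le> (x::real) \<Longrightarrow> ln (cosh x) \<le> x^2/2"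
proof -
  assume x: "0 \<le> x"
  have "(\<lambda>x. x^2/2 - ln (cosh x)) 0 \<le> (\<lambda>x. x^2/2 - ln (cosh x)) x"
  proof (rule mono_from_deriv[where f'="\<lambda>x. x - tanh x"])
    show "((\<lambda>x. x^2/2 - ln (cosh x)) has_real_derivative x - tanh x) (at x)" for x :: real
      by (auto intro!: derivative_eq_intros simp: tanh_def)
  qed (use x tanh_le_x in auto)
  then show ?thesis by simp
qed

lemma lncosh_ge4_pos: "0 \<le> (x::real) \<Longrightarrow> x^2/2 - x^4/12 \<le> ln (cosh x)"
proof -
  assume x: "0 \<le> x"
  have "(\<lambda>x. ln (cosh x) - x^2/2 + x^4/12) 0 \<le> (\<lambda>x. ln (cosh x) - x^2/2 + x^4/12) x"
  proof (rule mono_from_deriv[where f'="\<lambda>x. tanh x - x + x^3/3"])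
    show "((\<lambda>x. ln (cosh x) - x^2/2 + x^4/12) has_real_derivative tanh x - x + x^3/3) (at x)" for x :: real
      by (auto intro!: derivative_eq_intros simp: tanh_def)
  qed (use x tanh_ge3 in force)+
  then show ?thesis by simp
qed

lemma lncosh_le6_pos: "0 \<le> (x::real) \<Longrightarrow> ln (cosh x) \<le> x^2/2 - x^4/12 + x^6/45"
proof -
  assume x: "0 \<le> x"
  have "(\<lambda>x. x^2/2 - x^4/12 + x^6/45 - ln (cosh x)) 0 \<le> (\<lambda>x. x^2/2 - x^4/12 + x^6/45 - ln (cosh x)) x"
  proof (rule mono_from_deriv[where f'="\<lambda>x. x - x^3/3 + 2*x^5/15 - tanh x"])
    show "((\<lambda>x. x^2/2 - x^4/12 + x^6/45 - ln (cosh x)) has_real_derivative x - x^3/3 + 2*x^5/15 - tanh x) (at x)" for x :: real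
      by (auto intro!: derivative_eq_intros simp: tanh_def)
  qed (use x tanh_le5 in force)+
  then show ?thesis by simp
qed



definition lcerr :: "real \<Rightarrow> real" where "lcerr x = ln (cosh x) - x^2/2 + x^4/12"

lemma sum_sq_expand: "(\<Sum>i\<in>A. (t * f i + c)^2) = t^2 * (\<Sum>i\<in>A. f i^2) + 2*t*c*(\<Sum>i\<in>A. f i) + real (card A) * c^2"
proof -
  have "(\<Sum>i\<in>A. (t * f i + c)^2) = (\<Sum>i\<in>A. t^2 * f i^2 + 2*t*c * f i + c^2)"
    by (intro sum.cong) (auto simp: power2_eq_square algebra_simps)
  also have "\<dots> = t^2 * (\<Sum>i\<in>A. f i^2) + 2*t*c*(\<Sum>i\<in>A. f i) + real (card A) * c^2"
    by (simp add: sum.distrib sum_distrib_left)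
  finally show ?thesis .
qed

lemma sum_4_expand: "(\<Sum>i\<in>A. (t * f i + c)^4) = t^4 * (\<Sum>i\<in>A. f i^4) + 4*t^3*c*(\<Sum>i\<in>A. f i^3)
   + 6*t^2*c^2*(\<Sum>i\<in>A. f i^2) + 4*t*c^3*(\<Sum>i\<in>A. f i) + real (card A) * c^4"
proof -
  have "(\<Sum>i\<in>A. (t * f i + c)^4) = (\<Sum>i\<in>A. t^4 * f i^4 + 4*t^3*c * f i^3 + 6*t^2*c^2 * f i^2 + 4*t*c^3 * f i + c^4)"
    by (intro sum.cong) (auto simp: power_numeral_reduce algebra_simps)
  also have "\<dots> = t^4 * (\<Sum>i\<in>A. f i^4) + 4*t^3*c*(\<Sum>i\<in>A. f i^3)
   + 6*t^2*c^2*(\<Sum>i\<in>A. f i^2) + 4*t*c^3*(\<Sum>i\<in>A. f i) + real (card A) * c^4"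
    by (simp add: sum.distrib sum_distrib_left)
  finally show ?thesis .
qed

lemma ee1: "q > 0 \<Longrightarrow> a \<noteq> 0 \<Longrightarrow> (a*z/q)^2 * (q^4/a^2) = z^2*(q::real)^2"
  by (simp add: power_divide power_mult_distrib field_simps power2_eq_square power4_eq_xxxx)
lemma ee2: "q > 0 \<Longrightarrow> 2*(a*z/q)*(r/q^3)*(q^4*m1) = 2*(a*z*r*(m1::real))"
  by (simp add: field_simps power4_eq_xxxx power3_eq_cube)
lemma ee3: "q > 0 \<Longrightarrow> q^4*(r/q^3)^2 = r^2/(q::real)^2"
  by (simp add: power_divide field_simps power4_eq_xxxx power3_eq_cube power2_eq_square)
lemma ee4: "q > 0 \<Longrightarrow> (a*z/q)^4*(q^4*m4) = a^4*z^4*(m4::real)"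
  by (simp add: power_divide power_mult_distrib)
lemma ee5: "q > 0 \<Longrightarrow> 4*(a*z/q)^3*(r/q^3)*(q^4*m3) = 4*a^3*z^3*r*m3/(q::real)^2"
  by (simp add: power_divide power_mult_distrib field_simps power4_eq_xxxx power3_eq_cube power2_eq_square)
lemma ee6: "q > 0 \<Longrightarrow> a \<noteq> 0 \<Longrightarrow> 6*(a*z/q)^2*(r/q^3)^2*(q^4/a^2) = 6*z^2*r^2/(q::real)^4"
  by (simp add: power_divide power_mult_distrib field_simps power4_eq_xxxx power3_eq_cube power2_eq_square)
lemma ee7: "q > 0 \<Longrightarrow> 4*(a*z/q)*(r/q^3)^3*(q^4*m1) = 4*a*z*r^3*m1/(q::real)^6"
  by (simp add: power_divide power_mult_distrib field_simps power_numeral_reduce)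
lemma ee8: "q > 0 \<Longrightarrow> q^4*(r/q^3)^4 = r^4/(q::real)^8"
  by (simp add: power_divide field_simps power_numeral_reduce)
lemma ee0: "q > 0 \<Longrightarrow> q^4 * (z/q)^2 = z^2*(q::real)^2"
  by (simp add: power_divide field_simps power2_eq_square power4_eq_xxxx)

lemma lin_aux: fixes l1 z1 p1 r1 y1 s1 :: real assumes "l1 = z1/2 - ((z1 + 2*p1 + r1)/2 - y1/12 + s1)" shows "l1 = - p1 - r1/2 + y1/12 - s1"
  using assms by (simp add: field_simps)

lemma key_identity:
  fixes f :: "nat \<Rightarrow> real"
  assumes N: "real (card A) = q^4" and q: "q > 0"
    and a2: "a^2 * (\<Sum>i\<in>A. f i^2) = q^4"
    and S1: "(\<Sum>i\<in>A. f i) = q^4 * m1" and S3: "(\<Sum>i\<in>A. f i^3) = q^4 * m3" and S4: "(\<Sum>i\<in>A. f i^4) = q^4 * m4"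
  shows "q^4 * ((z/q)^2/2 - (1/q^4) * (\<Sum>i\<in>A. ln (cosh (a * f i * (z/q) + r/q^3))))
    = - (a*z*r*m1) - r^2/q^2/2 + (a^4*z^4*m4 + 4*a^3*z^3*r*m3/q^2 + 6*z^2*r^2/q^4 + 4*a*z*r^3*m1/q^6 + r^4/q^8)/12
      - (\<Sum>i\<in>A. lcerr (a * f i * (z/q) + r/q^3))"
proof -
  define t where "t = a*z/q"
  define c where "c = r/q^3"
  have x: "a * f i * (z/q) + r/q^3 = t * f i + c" for i by (simp add: t_def c_def)
  have lc: "ln (cosh y) = y^2/2 - y^4/12 + lcerr y" for y by (simp add: lcerr_def)
  have "(\<Sum>i\<in>A. ln (cosh (a * f i * (z/q) + r/q^3))) = (\<Sum>i\<in>A. (t * f i + c)^2/2 - (t * f i + c)^4/12 + lcerr (t * f i + c))"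
    by (simp only: x lc)
  also have "\<dots> = (\<Sum>i\<in>A. (t * f i + c)^2)/2 - (\<Sum>i\<in>A. (t * f i + c)^4)/12 + (\<Sum>i\<in>A. lcerr (t * f i + c))"
    by (simp add: sum.distrib sum_subtractf sum_divide_distrib)
  finally have E: "(\<Sum>i\<in>A. ln (cosh (a * f i * (z/q) + r/q^3))) = \<dots>" .
  have a0: "a \<noteq> 0"
  proof
    assume "a = 0"
    then have "q^4 = 0" using a2 by simp
    then show False using q by simp
  qed
  have S2: "(\<Sum>i\<in>A. f i^2) = q^4 / a^2"
    using a2 a0 by (simp add: eq_divide_eq mult.commute)
  have e1: "t^2 * (q^4/a^2) = z^2*q^2" unfolding t_def c_def using q a0 by (rule ee1)
  have e2: "2*t*c*(q^4*m1) = 2*(a*z*r*m1)" unfolding t_def c_def using q by (rule ee2)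
  have e3: "q^4*c^2 = r^2/q^2" unfolding t_def c_def using q by (rule ee3)
  have e4: "t^4*(q^4*m4) = a^4*z^4*m4" unfolding t_def c_def using q by (rule ee4)
  have e5: "4*t^3*c*(q^4*m3) = 4*a^3*z^3*r*m3/q^2" unfolding t_def c_def using q by (rule ee5)
  have e6: "6*t^2*c^2*(q^4/a^2) = 6*z^2*r^2/q^4" unfolding t_def c_def using q a0 by (rule ee6)
  have e7: "4*t*c^3*(q^4*m1) = 4*a*z*r^3*m1/q^6" unfolding t_def c_def using q by (rule ee7)
  have e8: "q^4*c^4 = r^4/q^8" unfolding t_def c_def using q by (rule ee8)
  have e0: "q^4 * (z/q)^2 = z^2*q^2" unfolding t_def c_def using q by (rule ee0)
  have xs: "(\<Sum>i\<in>A. lcerr (t * f i + c)) = (\<Sum>i\<in>A. lcerr (a * f i * (z/q) + r/q^3))" by (simp only: x)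
  have "q^4 * ((z/q)^2/2 - (1/q^4) * (\<Sum>i\<in>A. ln (cosh (a * f i * (z/q) + r/q^3))))
     = q^4 * (z/q)^2/2 - (\<Sum>i\<in>A. ln (cosh (a * f i * (z/q) + r/q^3)))" using q by (simp add: right_diff_distrib)
  also have "\<dots> = z^2*q^2/2 - ((z^2*q^2 + 2*(a*z*r*m1) + r^2/q^2)/2 - (a^4*z^4*m4 + 4*a^3*z^3*r*m3/q^2 + 6*z^2*r^2/q^4 + 4*a*z*r^3*m1/q^6 + r^4/q^8)/12
      + (\<Sum>i\<in>A. lcerr (a * f i * (z/q) + r/q^3)))"
    unfolding E sum_sq_expand sum_4_expand N S1 S3 S4 S2 e0 xs
    by (simp only: e1 e2 e3 e4 e5 e6 e7 e8)
  finally show ?thesis by (rule lin_aux)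
qed

lemma lcerr_nonneg: "0 \<le> lcerr x"
proof -
  have "\<bar>x\<bar>^2/2 - \<bar>x\<bar>^4/12 \<le> ln (cosh \<bar>x\<bar>)" by (rule lncosh_ge4_pos) simp
  moreover have "cosh \<bar>x\<bar> = cosh x" by (cases "x \<ge> 0") auto
  ultimately show ?thesis by (simp add: lcerr_def)
qed

lemma lcerr_upper: "lcerr x \<le> x^4 * min 1 (x^2)"
proof -
  have c: "cosh \<bar>x\<bar> = cosh x" by (cases "x \<ge> 0") auto
  have a: "ln (cosh x) \<le> x^2/2" using lncosh_le2_pos[of "\<bar>x\<bar>"] c by simp
  have b: "ln (cosh x) \<le> x^2/2 - x^4/12 + x^6/45" using lncosh_le6_pos[of "\<bar>x\<bar>"] c
    by (simp add: power_even_abs_numeral)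
  have x6: "x^6 = x^4 * x^2" by (simp add: power_add[symmetric])
  have p4: "0 \<le> x^4" "0 \<le> x^2" by auto
  show ?thesis
  proof (cases "x^2 \<le> 1")
    case True
    then have m: "min 1 (x^2) = x^2" by simp
    have "lcerr x \<le> x^6/45" using b unfolding lcerr_def by linarith
    also have "\<dots> \<le> x^6" by simp
    finally show ?thesis unfolding m x6 .
  next
    case False
    then have m: "min 1 (x^2) = 1" by simp
    have "lcerr x \<le> x^4/12" using a unfolding lcerr_def by linarith
    also have "\<dots> \<le> x^4" using p4 by simp
    finally show ?thesis unfolding m by simp
  qed
qed

lemma pow4_sum_le: "(u + c)^4 \<le> 8*(u^4 + (c::real)^4)"
proof -
  have "(u+c)^2 \<le> 2*(u^2+c^2)" by (smt (verit) sum_squares_ge_zero power2_eq_square power2_sum zero_le_power2 power2_diff)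
  then have "((u+c)^2)^2 \<le> (2*(u^2+c^2))^2" by (intro power_mono) auto
  moreover have "(2*(u^2+c^2))^2 \<le> 8*(u^4 + c^4)"
    using zero_le_power2[of "u^2 - c^2"] by (simp add: power2_eq_square power4_eq_xxxx algebra_simps)
  ultimately show ?thesis by (simp add: power_mult[symmetric])
qed

lemma lcerr_split: "lcerr (u + c) \<le> 8*(u^4 + c^4)*(min 1 (2*u^2) + 2*c^2)"
proof -
  have m: "min 1 ((u+c)^2) \<le> min 1 (2*u^2) + 2*c^2"
  proof -
    have "(u+c)^2 \<le> 2*u^2 + 2*c^2" by (smt (verit) sum_squares_ge_zero power2_eq_square power2_sum zero_le_power2 power2_diff)
    then show ?thesis by (simp add: min_def) (smt (verit) zero_le_power2)
  qed
  have "lcerr (u+c) \<le> (u+c)^4 * min 1 ((u+c)^2)" by (rule lcerr_upper)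
  also have "\<dots> \<le> 8*(u^4 + c^4)*(min 1 (2*u^2) + 2*c^2)"
    by (intro mult_mono pow4_sum_le m) auto
  finally show ?thesis .
qed

lemma trunc_bound:
  fixes t w K :: real
  assumes K: "K \<ge> 0"
  shows "(t*w)^4 * min 1 (2*(t*w)^2) \<le> 2*K*t^2*(t*w)^4 + 2*t^4*(w^4 - min (w^4) (K^2/2))"
proof (cases "w^2 \<le> K")
  case True
  have "t^2 * w^2 \<le> t^2 * K" using True by (simp add: mult_left_mono)
  then have "(t*w)^2 \<le> t^2 * K" by (simp add: power_mult_distrib)
  then have "(t*w)^4 * min 1 (2*(t*w)^2) \<le> (t*w)^4 * (2*(t^2*K))"
    by (intro mult_left_mono) auto
  moreover have "w^4 - min (w^4) (K^2/2) \<ge> 0" by simp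
  moreover have "(t*w)^4 * (2*(t^2*K)) = 2*K*t^2*(t*w)^4" by (simp only: mult_ac)
  moreover have "0 \<le> 2*t^4*(w^4 - min (w^4) (K^2/2))" using calculation(2) by simp
  ultimately show ?thesis by linarith
next
  case False
  then have "K^2 < (w^2)^2" using K by (intro power_strict_mono) auto
  then have k: "K^2 < w^4" by (simp add: power_mult[symmetric])
  have "(t*w)^4 * min 1 (2*(t*w)^2) \<le> (t*w)^4" by (rule mult_left_le) auto
  also have "\<dots> = t^4 * w^4" by (simp add: power_mult_distrib)
  also have "\<dots> \<le> t^4 * (2*(w^4 - min (w^4) (K^2/2)))"
  proof (rule mult_left_mono)
    have k0: "0 \<le> K^2" by simp
    have "K^2/2 \<le> w^4" using k k0 by linarith
    then have "min (w^4) (K^2/2) = K^2/2" by (rule min_absorb2)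
    moreover have "w^4 \<le> 2*(w^4 - K^2/2)"
    proof -
      have "2*(w^4 - K^2/2) = 2*w^4 - K^2" by (simp add: right_diff_distrib)
      then show ?thesis using k by linarith
    qed
    ultimately show "w^4 \<le> 2*(w^4 - min (w^4) (K^2/2))" by simp
  qed simp
  also have "\<dots> \<le> 2*K*t^2*(t*w)^4 + 2*t^4*(w^4 - min (w^4) (K^2/2))"
  proof -
    have "0 \<le> 2*K*t^2*(t*w)^4" using K by simp
    moreover have "t^4 * (2*(w^4 - min (w^4) (K^2/2))) = 2*t^4*(w^4 - min (w^4) (K^2/2))" by (simp only: mult_ac)
    ultimately show ?thesis by linarith
  qed
  finally show ?thesis .
qed

lemma lcerr_pt:
  assumes K: "K \<ge> 0"
  shows "lcerr (t*w + c) \<le> 16*K*t^6*w^4 + 16*t^4*(w^4 - min (w^4) (K^2/2)) + 16*c^2*t^4*w^4 + 8*c^4 + 16*c^6"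
proof -
  define u where "u = t*w"
  define M where "M = min 1 (2*u^2)"
  have M: "0 \<le> M" "M \<le> 1" by (auto simp: M_def)
  have "lcerr (t*w + c) \<le> 8*(u^4 + c^4)*(M + 2*c^2)" unfolding u_def M_def by (rule lcerr_split)
  also have "\<dots> = 8*(u^4*M) + 16*c^2*u^4 + 8*c^4*M + 16*c^6" by (simp add: algebra_simps power_numeral_reduce)
  also have "\<dots> \<le> 8*(2*K*t^2*u^4 + 2*t^4*(w^4 - min (w^4) (K^2/2))) + 16*c^2*u^4 + 8*c^4 + 16*c^6"
  proof -
    have h1: "u^4*M \<le> 2*K*t^2*u^4 + 2*t^4*(w^4 - min (w^4) (K^2/2))"
      using trunc_bound[OF K, of t w] unfolding u_def M_def .
    have h2: "c^4*M \<le> c^4" using M mult_left_le[of M "c^4"] by simp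
    have "8*(u^4*M) \<le> 8*(2*K*t^2*u^4 + 2*t^4*(w^4 - min (w^4) (K^2/2)))" using h1 by simp
    moreover have "8*c^4*M \<le> 8*c^4" using h2 by simp
    ultimately show ?thesis by linarith
  qed
  also have "\<dots> = 16*K*t^6*w^4 + 16*t^4*(w^4 - min (w^4) (K^2/2)) + 16*c^2*t^4*w^4 + 8*c^4 + 16*c^6"
    by (simp add: u_def power_mult_distrib algebra_simps power_numeral_reduce)
  finally show ?thesis .
qed






definition avg :: "(nat \<Rightarrow> nat \<Rightarrow> real) \<Rightarrow> nat \<Rightarrow> (real \<Rightarrow> real) \<Rightarrow> real" where
  "avg w N f = (1 / real N) * (\<Sum>i\<in>{1..N}. f (w N i))"

lemma emp_law_rd: "real_distribution (emp_law w N)"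
  unfolding emp_law_def real_distribution_def real_distribution_axioms_def
  by (auto intro!: measure_pmf.prob_space_distr)

lemma emp_integral:
  assumes N: "N \<ge> 1" and f: "f \<in> borel_measurable borel"
  shows "integral\<^sup>L (emp_law w N) f = avg w N f"
proof -
  have "integral\<^sup>L (emp_law w N) f = integral\<^sup>L (measure_pmf (pmf_of_set {1..N})) (\<lambda>i. f (w N i))"
    unfolding emp_law_def by (subst integral_distr) (auto simp: f)
  also have "\<dots> = (\<Sum>i\<in>{1..N}. f (w N i)) / card {1..N}"
    using N by (subst integral_pmf_of_set) auto
  finally show ?thesis by (simp add: avg_def)
qed

lemma emp_conv:
  assumes law: "real_distribution \<mu>" and conv: "weak_conv_m (emp_law w) \<mu>"
    and c: "\<And>x. isCont f x" and b: "\<And>x. \<bar>f x\<bar> \<le> B"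
  shows "(\<lambda>N. avg w N f) \<longlonglongrightarrow> integral\<^sup>L \<mu> f"
proof -
  have "(\<lambda>N. integral\<^sup>L (emp_law w N) f) \<longlonglongrightarrow> integral\<^sup>L \<mu> f"
    using weak_conv_imp_integral_bdd_continuous_conv[OF emp_law_rd law conv, of f B] c b by auto
  moreover have "eventually (\<lambda>N. integral\<^sup>L (emp_law w N) f = avg w N f) sequentially"
  proof -
    have fm: "f \<in> borel_measurable borel"
      using c by (intro borel_measurable_continuous_onI continuous_at_imp_continuous_on) auto
    show ?thesis unfolding eventually_sequentially using emp_integral[OF _ fm] by blast
  qed
  ultimately show ?thesis by (rule Lim_transform_eventually)
qed

lemma squeeze_eps:
  fixes a :: "nat \<Rightarrow> real" and b :: "nat \<Rightarrow> nat \<Rightarrow> real" and C :: "nat \<Rightarrow> real"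
  assumes a0: "eventually (\<lambda>N. 0 \<le> a N) sequentially"
    and ab: "\<And>K. eventually (\<lambda>N. a N \<le> b K N) sequentially"
    and bC: "\<And>K. b K \<longlonglongrightarrow> C K" and C0: "C \<longlonglongrightarrow> 0"
  shows "a \<longlonglongrightarrow> 0"
proof (rule order_tendstoI)
  fix y :: real assume "y < 0"
  with a0 show "eventually (\<lambda>N. y < a N) sequentially" by (auto elim: eventually_mono)
next
  fix y :: real assume y: "0 < y"
  then have "eventually (\<lambda>K. C K < y/2) sequentially" using C0 by (intro order_tendstoD) auto
  then obtain K where K: "C K < y/2" by (auto simp: eventually_sequentially)
  then have "C K < y" using y by linarith
  then have "eventually (\<lambda>N. b K N < y) sequentially" by (rule order_tendstoD(2)[OF bC[of K]])
  with ab[of K] show "eventually (\<lambda>N. a N < y) sequentially" by eventually_elim auto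
qed


lemma avg_mono: "(\<And>x. f x \<le> g x) \<Longrightarrow> avg w N f \<le> avg w N g"
  unfolding avg_def by (intro mult_left_mono sum_mono) auto

lemma avg_diff: "avg w N f - avg w N g = avg w N (\<lambda>x. f x - g x)"
  unfolding avg_def by (simp add: sum_subtractf right_diff_distrib)

lemma avg_abs: "\<bar>avg w N f\<bar> \<le> avg w N (\<lambda>x. \<bar>f x\<bar>)"
proof -
  have "\<bar>(\<Sum>i\<in>{1..N}. f (w N i))\<bar> \<le> (\<Sum>i\<in>{1..N}. \<bar>f (w N i)\<bar>)" by (rule sum_abs)
  moreover have "\<bar>1 / real N\<bar> = 1 / real N" by simp
  ultimately show ?thesis unfolding avg_def abs_mult by (metis mult_left_mono of_nat_0_le_iff zero_le_divide_1_iff)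
qed

lemma avg_const: "N \<ge> 1 \<Longrightarrow> avg w N (\<lambda>x. c) = c"
  unfolding avg_def by simp

lemma avg_cmult: "avg w N (\<lambda>x. c * f x) = c * avg w N f"
  unfolding avg_def by (simp add: sum_distrib_left)

lemma emp_moment_avg: "emp_moment w N k = avg w N (\<lambda>x. x^k)"
  unfolding emp_moment_def avg_def by simp

definition ck :: "nat \<Rightarrow> real \<Rightarrow> real" where
  "ck K x = max (-(real K + 1)) (min x (real K + 1))"

lemma ck_cont: "isCont (ck K) x"
  unfolding ck_def by (intro continuous_intros)

lemma ck_bdd: "\<bar>ck K x\<bar> \<le> real K + 1"
  unfolding ck_def by auto

lemma ck_err: "\<bar>x - ck K x\<bar> \<le> x^2 / (real K + 1)"
proof (cases "\<bar>x\<bar> \<le> real K + 1")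
  case True
  then have "ck K x = x" unfolding ck_def by auto
  then show ?thesis by simp
next
  case False
  then have "\<bar>x - ck K x\<bar> \<le> \<bar>x\<bar>" unfolding ck_def by auto
  also have "\<bar>x\<bar> \<le> x^2 / (real K + 1)"
  proof -
    have "\<bar>x\<bar> * (real K + 1) \<le> \<bar>x\<bar> * \<bar>x\<bar>" using False by (intro mult_left_mono) auto
    also have "\<dots> = x^2" by (simp add: power2_eq_square)
    finally show ?thesis by (simp add: pos_le_divide_eq)
  qed
  finally show ?thesis .
qed

lemma min4_cont: "isCont (\<lambda>x::real. min (x^4) c) x"
  by (intro continuous_intros)

lemma min4_bdd: "c \<ge> 0 \<Longrightarrow> \<bar>min (x^4) c\<bar> \<le> (c::real)"
  by auto

lemma meas_mu:
  assumes "real_distribution \<mu>" and "\<And>x. isCont f x"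
  shows "f \<in> borel_measurable \<mu>"
proof -
  have "sets \<mu> = sets borel" using assms(1) by (simp add: real_distribution_def real_distribution_axioms_def)
  then have "borel_measurable \<mu> = borel_measurable borel" by (rule measurable_cong_sets) simp
  moreover have "f \<in> borel_measurable borel"
    using assms(2) by (intro borel_measurable_continuous_onI continuous_at_imp_continuous_on) auto
  ultimately show ?thesis by blast
qed

lemma dc_clip:
  assumes law: "real_distribution \<mu>" and int1: "integrable \<mu> (\<lambda>x. x)"
  shows "(\<lambda>K. \<integral>x. ck K x \<partial>\<mu>) \<longlonglongrightarrow> (\<integral>x. x \<partial>\<mu>)"
proof (rule integral_dominated_convergence[where w="\<lambda>x. \<bar>x\<bar>"])
  show "(\<lambda>x. x) \<in> borel_measurable \<mu>" by (rule meas_mu[OF law]) (intro continuous_intros)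
  show "ck K \<in> borel_measurable \<mu>" for K by (rule meas_mu[OF law ck_cont])
  show "integrable \<mu> (\<lambda>x. \<bar>x\<bar>)" using int1 by (rule integrable_abs)
  show "AE x in \<mu>. (\<lambda>K. ck K x) \<longlonglongrightarrow> x"
  proof (rule AE_I2, rule tendsto_eventually)
    fix x :: real
    show "eventually (\<lambda>K. ck K x = x) sequentially"
      unfolding eventually_sequentially
    proof (intro exI allI impI)
      fix K assume "nat \<lceil>\<bar>x\<bar>\<rceil> \<le> K"
      then have "\<bar>x\<bar> \<le> real K + 1" by linarith
      then show "ck K x = x" unfolding ck_def by auto
    qed
  qed
  show "AE x in \<mu>. norm (ck K x) \<le> \<bar>x\<bar>" for K
    by (rule AE_I2) (auto simp: ck_def)
qed

lemma dc_min4: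
  assumes law: "real_distribution \<mu>" and int4: "integrable \<mu> (\<lambda>x. x^4)"
  shows "(\<lambda>K. \<integral>x. min (x^4) ((real K)^2/2) \<partial>\<mu>) \<longlonglongrightarrow> (\<integral>x. x^4 \<partial>\<mu>)"
proof (rule integral_dominated_convergence[where w="\<lambda>x. x^4"])
  show "(\<lambda>x. x^4) \<in> borel_measurable \<mu>" by (rule meas_mu[OF law]) (intro continuous_intros)
  show "(\<lambda>x. min (x^4) ((real K)^2/2)) \<in> borel_measurable \<mu>" for K by (rule meas_mu[OF law min4_cont])
  show "integrable \<mu> (\<lambda>x. x^4)" by (rule int4)
  show "AE x in \<mu>. (\<lambda>K. min (x^4) ((real K)^2/2)) \<longlonglongrightarrow> x^4"
  proof (rule AE_I2, rule tendsto_eventually)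
    fix x :: real
    show "eventually (\<lambda>K. min (x^4) ((real K)^2/2) = x^4) sequentially"
      unfolding eventually_sequentially
    proof (intro exI allI impI)
      fix K assume K: "nat \<lceil>2 * x^4\<rceil> + 1 \<le> K"
      then have "2 * x^4 \<le> real K" "1 \<le> real K" by linarith+
      moreover have "real K \<le> (real K)^2" using \<open>1 \<le> real K\<close> by (simp add: power2_eq_square)
      ultimately have "x^4 \<le> (real K)^2/2" by linarith
      then show "min (x^4) ((real K)^2/2) = x^4" by simp
    qed
  qed
  show "AE x in \<mu>. norm (min (x^4) ((real K)^2/2)) \<le> x^4" for K
    by (rule AE_I2) auto
qed



lemma iq_lim: "(\<lambda>N. 1 / real N powr (1/4)) \<longlonglongrightarrow> 0"
proof -
  have "(\<lambda>N. real N powr (-(1/4))) \<longlonglongrightarrow> 0"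
    by (rule tendsto_neg_powr) (auto simp: filterlim_real_sequentially)
  then show ?thesis by (simp add: powr_minus_divide)
qed

lemma q4: "N \<ge> 1 \<Longrightarrow> (real N powr (1/4))^4 = real N"
  by (subst powr_power) auto

lemma q3: "N \<ge> 1 \<Longrightarrow> (real N powr (1/4))^3 = real N powr (3/4)"
  by (subst powr_power) auto

lemma mom_pos:
  assumes wpos: "\<And>N i. i \<in> {1..N} \<Longrightarrow> w N i > 0" and N: "N \<ge> 1"
  shows "emp_moment w N k > 0"
proof -
  have "(\<Sum>i\<in>{1..N}. w N i ^ k) > 0"
    using N wpos by (intro sum_pos) auto
  then show ?thesis using N unfolding emp_moment_def by simp
qed

lemma mom_sum: "N \<ge> 1 \<Longrightarrow> (\<Sum>i\<in>{1..N}. w N i ^ k) = real N * emp_moment w N k"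
  unfolding emp_moment_def by simp

lemma alpha_eq:
  assumes "emp_moment w N 1 > 0" "emp_moment w N 2 > 0"
  shows "alpha_N w N (beta_cN w N) = 1 / sqrt (emp_moment w N 2)"
  using assms unfolding alpha_N_def beta_cN_def nu_N_def
  by (simp add: real_sqrt_divide)

lemma m2_ge_m1sq: "(emp_moment w N 1)^2 \<le> emp_moment w N 2"
proof (cases "N \<ge> 1")
  case False
  then have "N = 0" by simp
  then show ?thesis by (simp add: emp_moment_def)
next
  case True
  define m where "m = emp_moment w N 1"
  have "0 \<le> (\<Sum>i\<in>{1..N}. (1 * w N i + (-m))^2)" by (intro sum_nonneg) auto
  also have "\<dots> = (\<Sum>i\<in>{1..N}. w N i^2) + 2*(-m)*(\<Sum>i\<in>{1..N}. w N i) + real N * m^2"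
    by (subst sum_sq_expand) simp
  also have "\<dots> = real N * emp_moment w N 2 - real N * m^2"
    using True unfolding m_def by (simp add: mom_sum[symmetric] power2_eq_square)
  finally have "0 \<le> real N * (emp_moment w N 2 - m^2)" by (simp add: right_diff_distrib)
  then show ?thesis using True unfolding m_def by (simp add: zero_le_mult_iff)
qed

lemma eb1: "q > 0 \<Longrightarrow> 16*K*(a*z/q)^6*(q^4*m4) = 16*K*a^6*z^6*m4/(q::real)^2"
  by (simp add: power_divide power_mult_distrib field_simps power_numeral_reduce)
lemma eb2: "q > 0 \<Longrightarrow> 16*(a*z/q)^4*(q^4*m4 - q^4*h) = 16*a^4*z^4*(m4 - (h::real))"
  by (simp add: power_divide power_mult_distrib field_simps)
lemma eb3: "q > 0 \<Longrightarrow> 16*(r/q^3)^2*(a*z/q)^4*(q^4*m4) = 16*r^2*a^4*z^4*m4/(q::real)^6"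
  by (simp add: power_divide power_mult_distrib field_simps power_numeral_reduce)
lemma eb4: "q > 0 \<Longrightarrow> q^4 * (8*(r/q^3)^4 + 16*(r/q^3)^6) = 8*r^4/q^8 + 16*r^6/(q::real)^14"
  by (simp add: power_divide power_mult_distrib field_simps power_numeral_reduce)

lemma err_sum_bound:
  fixes f :: "nat \<Rightarrow> real"
  assumes K: "K \<ge> 0" and fin: "finite A" and N: "real (card A) = q^4" and q: "q > 0"
    and S4: "(\<Sum>i\<in>A. f i^4) = q^4 * m4" and Sh: "(\<Sum>i\<in>A. min (f i^4) (K^2/2)) = q^4 * h"
  shows "(\<Sum>i\<in>A. lcerr (a * f i * (z/q) + r/q^3))
     \<le> 16*K*a^6*z^6*m4/q^2 + 16*a^4*z^4*(m4 - h) + 16*r^2*a^4*z^4*m4/q^6 + 8*r^4/q^8 + 16*r^6/q^14"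
proof -
  define t where "t = a*z/q"
  define c where "c = r/q^3"
  have x: "a * f i * (z/q) + r/q^3 = t * f i + c" for i by (simp add: t_def c_def)
  have "(\<Sum>i\<in>A. lcerr (a * f i * (z/q) + r/q^3)) = (\<Sum>i\<in>A. lcerr (t * f i + c))"
    by (simp only: x)
  also have "\<dots> \<le> (\<Sum>i\<in>A. 16*K*t^6*f i^4 + 16*t^4*(f i^4 - min (f i^4) (K^2/2)) + 16*c^2*t^4*f i^4 + (8*c^4 + 16*c^6))"
    by (intro sum_mono) (use lcerr_pt[OF K] in \<open>simp add: add.assoc\<close>)
  also have "\<dots> = 16*K*t^6*(\<Sum>i\<in>A. f i^4) + 16*t^4*((\<Sum>i\<in>A. f i^4) - (\<Sum>i\<in>A. min (f i^4) (K^2/2)))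
      + 16*c^2*t^4*(\<Sum>i\<in>A. f i^4) + real (card A) * (8*c^4 + 16*c^6)"
    by (simp add: sum.distrib sum_distrib_left sum_subtractf) (simp only: sum_distrib_left[symmetric] sum_subtractf)
  also have "\<dots> = 16*K*a^6*z^6*m4/q^2 + 16*a^4*z^4*(m4 - h) + 16*r^2*a^4*z^4*m4/q^6 + (8*r^4/q^8 + 16*r^6/q^14)"
    unfolding S4 Sh N t_def c_def using q by (simp only: eb1 eb2 eb3 eb4)
  finally show ?thesis by (simp add: add.assoc)
qed



lemma pw3: "0 \<le> (x::real) \<Longrightarrow> x^3 \<le> x^2 + x^4"
proof (cases "x \<le> 1")
  case True
  assume x: "0 \<le> x"
  have "x^3 = x^2 * x" by (simp add: power_numeral_reduce)
  also have "\<dots> \<le> x^2 * 1" using True x by (intro mult_left_mono) auto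
  finally have "x^3 \<le> x^2" by simp
  moreover have "0 \<le> x^4" using x by simp
  ultimately show ?thesis by linarith
next
  case False
  assume x: "0 \<le> x"
  have "x^3 * 1 \<le> x^3 * x" using False x by (intro mult_left_mono) auto
  also have "\<dots> = x^4" by (simp add: power_numeral_reduce)
  finally have "x^3 \<le> x^4" by simp
  moreover have "0 \<le> x^2" by simp
  ultimately show ?thesis by linarith
qed

lemma m3_bound:
  assumes wpos: "\<And>N i. i \<in> {1..N} \<Longrightarrow> w N i > 0"
  shows "emp_moment w N 3 \<le> emp_moment w N 2 + emp_moment w N 4"
proof -
  have "(\<Sum>i\<in>{1..N}. w N i ^ 3) \<le> (\<Sum>i\<in>{1..N}. w N i ^ 2 + w N i ^ 4)"
    using wpos by (intro sum_mono pw3) (auto intro: less_imp_le)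
  then show ?thesis unfolding emp_moment_def by (simp add: sum.distrib divide_right_mono add_divide_distrib[symmetric])
qed

lemma NG_identity:
  assumes wpos: "\<And>N i. i \<in> {1..N} \<Longrightarrow> w N i > 0" and N: "N \<ge> 1"
  defines "q \<equiv> real N powr (1/4)" and "al \<equiv> 1 / sqrt (emp_moment w N 2)"
  shows "real N * G_N w N (beta_cN w N) (3/4) (z / real N powr (1/4)) r
    = - (al*z*r*emp_moment w N 1) - r^2/q^2/2 + (al^4*z^4*emp_moment w N 4 + 4*al^3*z^3*r*emp_moment w N 3/q^2
        + 6*z^2*r^2/q^4 + 4*al*z*r^3*emp_moment w N 1/q^6 + r^4/q^8)/12
      - (\<Sum>i\<in>{1..N}. lcerr (al * w N i * (z/q) + r/q^3))"
proof -
  have m1: "emp_moment w N 1 > 0" and m2: "emp_moment w N 2 > 0" using mom_pos[OF wpos N] by auto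
  have alpha: "alpha_N w N (beta_cN w N) = al" unfolding al_def by (rule alpha_eq[OF m1 m2])
  have qpos: "q > 0" unfolding q_def using N by simp
  have Nq: "real N = q^4" unfolding q_def using q4[OF N] by simp
  have q3': "real N powr (3/4) = q^3" unfolding q_def using q3[OF N] by simp
  have card: "real (card {1..N}) = q^4" using Nq by simp
  have a2: "al^2 * (\<Sum>i\<in>{1..N}. w N i^2) = q^4"
    using m2 N unfolding al_def mom_sum[OF N] Nq[symmetric] by (simp add: power_divide)
  have S1: "(\<Sum>i\<in>{1..N}. w N i) = q^4 * emp_moment w N 1" using mom_sum[OF N, of w 1] Nq by simp
  have S3: "(\<Sum>i\<in>{1..N}. w N i^3) = q^4 * emp_moment w N 3" using mom_sum[OF N, of w 3] Nq by simp
  have S4: "(\<Sum>i\<in>{1..N}. w N i^4) = q^4 * emp_moment w N 4" using mom_sum[OF N, of w 4] Nq by simp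
  have "real N * G_N w N (beta_cN w N) (3/4) (z / real N powr (1/4)) r
     = q^4 * ((z/q)^2/2 - (1/q^4) * (\<Sum>i\<in>{1..N}. ln (cosh (al * w N i * (z/q) + r/q^3))))"
    unfolding G_N_def alpha q3' unfolding q_def[symmetric] unfolding Nq ..
  also note key_identity[OF card qpos a2 S1 S3 S4]
  finally show ?thesis .
qed



lemma P_conv:
  fixes X r q Y b1 m3 c1 d1 e1 S :: real
  shows "- X - r^2*(1/q)^2/2 + (Y + b1*(m3*(1/q)^2) + c1*(1/q)^4 + d1*(1/q)^6 + e1*(1/q)^8)/12 - S
     = - X - r^2/q^2/2 + (Y + b1*m3/q^2 + c1/q^4 + d1/q^6 + e1/q^8)/12 - S"
  by (simp add: power_divide)

theorem mainTheorem10: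
  fixes w :: "nat \<Rightarrow> nat \<Rightarrow> real" and \<mu> :: "real measure" and z r :: real
  assumes wpos: "\<And>N i. i \<in> {1..N} \<Longrightarrow> w N i > 0"
    and law: "real_distribution \<mu>"
    and conv: "weak_conv_m (emp_law w) \<mu>"
    and int2: "integrable \<mu> (\<lambda>x. x ^ 2)"
    and mom2: "(\<lambda>N. emp_moment w N 2) \<longlonglongrightarrow> (\<integral>x. x ^ 2 \<partial>\<mu>)"
    and mean_pos: "(\<integral>x. x \<partial>\<mu>) > 0"
    and int4: "integrable \<mu> (\<lambda>x. x ^ 4)"
    and mom4: "(\<lambda>N. emp_moment w N 4) \<longlonglongrightarrow> (\<integral>x. x ^ 4 \<partial>\<mu>)"
  shows "(\<lambda>N. real N * G_N w N (beta_cN w N) (3/4) (z / real N powr (1/4)) r)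
     \<longlonglongrightarrow> (- z * r * sqrt ((\<integral>x. x \<partial>\<mu>) / ((\<integral>x. x ^ 2 \<partial>\<mu>) / (\<integral>x. x \<partial>\<mu>)))
          + 1/12 * (\<integral>x. x ^ 4 \<partial>\<mu>) / (\<integral>x. x ^ 2 \<partial>\<mu>)\<^sup>2 * z ^ 4)"
proof -
  define E1 where "E1 = (\<integral>x. x \<partial>\<mu>)"
  define E2 where "E2 = (\<integral>x. x^2 \<partial>\<mu>)"
  define E4 where "E4 = (\<integral>x. x^4 \<partial>\<mu>)"
  have E1pos: "E1 > 0" using mean_pos unfolding E1_def .
  have int1: "integrable \<mu> (\<lambda>x. x)"
  proof (rule ccontr)
    assume "\<not> integrable \<mu> (\<lambda>x. x)"
    then have "(\<integral>x. x \<partial>\<mu>) = 0" by (rule not_integrable_integral_eq)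
    with mean_pos show False by simp
  qed
  have m2lim: "(\<lambda>N. emp_moment w N 2) \<longlonglongrightarrow> E2" using mom2 unfolding E2_def .
  have m4lim: "(\<lambda>N. emp_moment w N 4) \<longlonglongrightarrow> E4" using mom4 unfolding E4_def .

  have m1lim: "(\<lambda>N. emp_moment w N 1) \<longlonglongrightarrow> E1"
  proof -
    define b where "b K N = emp_moment w N 2/(real K+1) + \<bar>avg w N (ck K) - (\<integral>x. ck K x \<partial>\<mu>)\<bar> + \<bar>(\<integral>x. ck K x \<partial>\<mu>) - E1\<bar>" for K N
    define C where "C K = E2/(real K+1) + \<bar>(\<integral>x. ck K x \<partial>\<mu>) - (\<integral>x. ck K x \<partial>\<mu>)\<bar> + \<bar>(\<integral>x. ck K x \<partial>\<mu>) - E1\<bar>" for K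
    have "(\<lambda>N. \<bar>emp_moment w N 1 - E1\<bar>) \<longlonglongrightarrow> 0"
    proof (rule squeeze_eps[where b=b and C=C])
      show "eventually (\<lambda>N. 0 \<le> \<bar>emp_moment w N 1 - E1\<bar>) sequentially" by simp
      show "eventually (\<lambda>N. \<bar>emp_moment w N 1 - E1\<bar> \<le> b K N) sequentially" for K
      proof (intro always_eventually allI)
        fix N
        have "\<bar>emp_moment w N 1 - avg w N (ck K)\<bar> = \<bar>avg w N (\<lambda>x. x - ck K x)\<bar>"
          by (simp add: emp_moment_avg avg_diff)
        also have "\<dots> \<le> avg w N (\<lambda>x. \<bar>x - ck K x\<bar>)" by (rule avg_abs)
        also have "\<dots> \<le> avg w N (\<lambda>x. (1/(real K+1)) * x^2)"
          by (rule avg_mono) (use ck_err in auto)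
        also have "\<dots> = (1/(real K+1)) * avg w N (\<lambda>x. x^2)" by (rule avg_cmult)
        also have "\<dots> = emp_moment w N 2/(real K+1)" by (simp add: emp_moment_avg)
        finally have h: "\<bar>emp_moment w N 1 - avg w N (ck K)\<bar> \<le> emp_moment w N 2/(real K+1)" .
        have t1: "\<bar>emp_moment w N 1 - E1\<bar> \<le> \<bar>emp_moment w N 1 - avg w N (ck K)\<bar> + \<bar>avg w N (ck K) - E1\<bar>"
          by arith
        have t2: "\<bar>avg w N (ck K) - E1\<bar> \<le> \<bar>avg w N (ck K) - (\<integral>x. ck K x \<partial>\<mu>)\<bar> + \<bar>(\<integral>x. ck K x \<partial>\<mu>) - E1\<bar>"
          by arith
        show "\<bar>emp_moment w N 1 - E1\<bar> \<le> b K N"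
          unfolding b_def using h t1 t2 by linarith
      qed
      show "b K \<longlonglongrightarrow> C K" for K
        unfolding b_def C_def
        by (intro tendsto_intros m2lim emp_conv[OF law conv ck_cont ck_bdd]) auto
      have c1: "(\<lambda>K. E2/(real K+1)) \<longlonglongrightarrow> 0"
      proof -
        have "(\<lambda>K. E2 * inverse (real (Suc K))) \<longlonglongrightarrow> E2 * 0"
          by (intro tendsto_intros LIMSEQ_inverse_real_of_nat)
        then show ?thesis by (simp add: divide_inverse add.commute)
      qed
      have c2: "(\<lambda>K. \<bar>(\<integral>x. ck K x \<partial>\<mu>) - E1\<bar>) \<longlonglongrightarrow> 0"
        using dc_clip[OF law int1] unfolding E1_def by (intro tendsto_rabs_zero LIM_zero)
      show "C \<longlonglongrightarrow> 0"
        unfolding C_def using tendsto_add[OF c1 c2] by simp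
    qed
    then show ?thesis by (rule LIM_zero_cancel[OF tendsto_rabs_zero_cancel])
  qed

  have E2pos: "E2 > 0"
  proof -
    have "E1^2 \<le> E2"
      by (rule LIMSEQ_le[OF tendsto_power[OF m1lim] m2lim]) (intro exI[of _ 0] allI impI m2_ge_m1sq)
    moreover have "E1^2 > 0" using E1pos by simp
    ultimately show ?thesis by linarith
  qed

  define q where "q N = real N powr (1/4)" for N
  define iq where "iq N = 1 / q N" for N
  define al where "al N = 1 / sqrt (emp_moment w N 2)" for N
  define A where "A = 1 / sqrt E2"
  have iqlim: "iq \<longlonglongrightarrow> 0" unfolding iq_def q_def by (rule iq_lim)
  have allim: "al \<longlonglongrightarrow> A" unfolding al_def A_def using E2pos by (intro tendsto_intros m2lim) auto
  define R3 where "R3 N = emp_moment w N 3 * iq N ^2" for N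
  have R3lim: "R3 \<longlonglongrightarrow> 0"
  proof (rule Lim_null_comparison)
    show "eventually (\<lambda>N. norm (R3 N) \<le> (emp_moment w N 2 + emp_moment w N 4) * iq N^2) sequentially"
    proof (rule eventually_sequentiallyI[of 1])
      fix N :: nat assume N: "1 \<le> N"
      have "0 < emp_moment w N 3" by (rule mom_pos[OF wpos N])
      then show "norm (R3 N) \<le> (emp_moment w N 2 + emp_moment w N 4) * iq N^2"
        unfolding R3_def using m3_bound[OF wpos, where N=N] by (simp add: abs_mult mult_right_mono)
    qed
    show "(\<lambda>N. (emp_moment w N 2 + emp_moment w N 4) * iq N^2) \<longlonglongrightarrow> 0"
      using tendsto_mult[OF tendsto_add[OF m2lim m4lim] tendsto_power[OF iqlim, of 2]] by simp
  qed
  define P where "P N = - (al N*z*r*emp_moment w N 1) - r^2*iq N^2/2 + (al N^4*z^4*emp_moment w N 4 + 4*al N^3*z^3*r*R3 N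
        + 6*z^2*r^2*iq N^4 + 4*al N*z*r^3*emp_moment w N 1*iq N^6 + r^4*iq N^8)/12" for N
  define Er where "Er N = (\<Sum>i\<in>{1..N}. lcerr (al N * w N i * (z/q N) + r/q N^3))" for N
  have ident: "eventually (\<lambda>N. P N - Er N = real N * G_N w N (beta_cN w N) (3/4) (z / real N powr (1/4)) r) sequentially"
  proof (rule eventually_sequentiallyI[of 1])
    fix N :: nat assume N: "1 \<le> N"
    show "P N - Er N = real N * G_N w N (beta_cN w N) (3/4) (z / real N powr (1/4)) r"
      apply (subst NG_identity[OF wpos N])
       apply blast
      unfolding P_def Er_def R3_def iq_def q_def al_def
      by (rule P_conv)
  qed
  have Plim: "P \<longlonglongrightarrow> - (A*z*r*E1) - r^2*0^2/2 + (A^4*z^4*E4 + 4*A^3*z^3*r*0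
        + 6*z^2*r^2*0^4 + 4*A*z*r^3*E1*0^6 + r^4*0^8)/12"
    unfolding P_def by (intro tendsto_intros allim m1lim m4lim iqlim R3lim) simp_all
  define H where "H K = (\<integral>x. min (x^4) ((real K)^2/2) \<partial>\<mu>)" for K
  define h where "h K N = avg w N (\<lambda>x. min (x^4) ((real K)^2/2))" for K N
  define b where "b K N = 16*real K*al N^6*z^6*emp_moment w N 4*iq N^2 + 16*al N^4*z^4*(emp_moment w N 4 - h K N)
      + 16*r^2*al N^4*z^4*emp_moment w N 4*iq N^6 + 8*r^4*iq N^8 + 16*r^6*iq N^14" for K N
  define C where "C K = 16*A^4*z^4*(E4 - H K)" for K
  have Erlim: "Er \<longlonglongrightarrow> 0"
  proof (rule squeeze_eps[where b=b and C=C])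
    show "eventually (\<lambda>N. 0 \<le> Er N) sequentially"
      unfolding Er_def by (intro always_eventually allI sum_nonneg lcerr_nonneg)
    show "eventually (\<lambda>N. Er N \<le> b K N) sequentially" for K
    proof (rule eventually_sequentiallyI[of 1])
      fix N :: nat assume N: "1 \<le> N"
      have qpos: "q N > 0" unfolding q_def using N by simp
      have card: "real (card {1..N}) = q N^4" using q4[OF N] unfolding q_def by simp
      have S4: "(\<Sum>i\<in>{1..N}. w N i^4) = q N^4 * emp_moment w N 4"
        using mom_sum[OF N, of w 4] q4[OF N] unfolding q_def by simp
      have Sh: "(\<Sum>i\<in>{1..N}. min (w N i^4) ((real K)^2/2)) = q N^4 * h K N"
        using N q4[OF N] unfolding h_def avg_def q_def by simp
      have "Er N \<le> 16*real K*al N^6*z^6*emp_moment w N 4/q N^2 + 16*al N^4*z^4*(emp_moment w N 4 - h K N)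
          + 16*r^2*al N^4*z^4*emp_moment w N 4/q N^6 + 8*r^4/q N^8 + 16*r^6/q N^14"
        unfolding Er_def by (rule err_sum_bound[OF _ _ card qpos S4 Sh]) auto
      then show "Er N \<le> b K N" unfolding b_def iq_def by (simp add: power_one_over)
    qed
    show "b K \<longlonglongrightarrow> C K" for K
    proof -
      have hlim: "h K \<longlonglongrightarrow> H K" unfolding h_def H_def
        by (rule emp_conv[OF law conv min4_cont]) (rule min4_bdd, simp)
      have "b K \<longlonglongrightarrow> 16*real K*A^6*z^6*E4*0^2 + 16*A^4*z^4*(E4 - H K)
          + 16*r^2*A^4*z^4*E4*0^6 + 8*r^4*0^8 + 16*r^6*0^14"
        unfolding b_def by (intro tendsto_intros allim m4lim iqlim hlim)
      then show ?thesis unfolding C_def by simp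
    qed
    show "C \<longlonglongrightarrow> 0"
    proof -
      have "C \<longlonglongrightarrow> 16*A^4*z^4*(E4 - E4)" unfolding C_def H_def E4_def
        by (intro tendsto_intros dc_min4[OF law int4])
      then show ?thesis by simp
    qed
  qed
  have lim: "(\<lambda>N. P N - Er N) \<longlonglongrightarrow> - (A*z*r*E1) + A^4*z^4*E4/12"
    using tendsto_diff[OF Plim Erlim] by simp
  have sq: "sqrt (E1 / (E2 / E1)) = E1 * A"
  proof -
    have "E1 / (E2 / E1) = E1^2 / E2" using E1pos by (simp add: power2_eq_square)
    then show ?thesis unfolding A_def using E1pos E2pos by (simp add: real_sqrt_divide)
  qed
  have A4: "A^4 = 1 / E2^2"
  proof -
    have "(sqrt E2)^4 = (sqrt E2)^2 * (sqrt E2)^2" by (simp only: power4_eq_xxxx power2_eq_square mult.assoc)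
    also have "\<dots> = E2^2"
    proof -
      have s2: "(sqrt E2)^2 = E2" using E2pos by simp
      show ?thesis unfolding s2 by (simp add: power2_eq_square)
    qed
    finally show ?thesis unfolding A_def by (simp add: power_one_over)
  qed
  have tgt: "- (A*z*r*E1) + A^4*z^4*E4/12 = - z * r * sqrt (E1 / (E2 / E1)) + 1/12 * E4 / E2\<^sup>2 * z ^ 4"
    unfolding sq A4 by (simp add: algebra_simps)
  have "(\<lambda>N. real N * G_N w N (beta_cN w N) (3/4) (z / real N powr (1/4)) r)
     \<longlonglongrightarrow> - z * r * sqrt (E1 / (E2 / E1)) + 1/12 * E4 / E2\<^sup>2 * z ^ 4"
    using Lim_transform_eventually[OF lim ident] unfolding tgt .
  then show ?thesis unfolding E1_def E2_def E4_def .
qed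


end
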